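(* Let $\Lambda,\mu,\beta,\rho,\phi,\alpha,\omega>0$, $d\ge 0$, $\psi,\theta\ge 0$, $0<\eta_C\le1$, $\eta_A\ge 1$. Consider the system, with $N=S+I+C+A+E$, \begin{align*} \dot S&=\Lambda-\frac{\beta(I+\eta_C C+\eta_A A)}{N}S-\mu S-\psi S+\theta E,\\ \dot I&=\frac{\beta(I+\eta_C C+\eta_A A)}{N}S-(\rho+\phi+\mu)I+\alpha A+\omega C,\\ \dot C&=\phi I-(\omega+\mu)C,\\ \dot A&=\rho I-(\alpha+\mu+d)A,\\ \dot E&=\psi S-(\mu+\theta)E, \end{align*} on the region $$\Omega_P=\left\{(S,I,C,A,E)\in\mathbb{R}_{\ge 0}^5: S\le\frac{(\theta+\mu)\Lambda}{\mu(\theta+\psi+\mu)},\ E\le\frac{\psi\Lambda}{\mu(\theta+\psi+\mu)},\ N\le\frac{\Lambda}{\mu}\right\}.$$ Let $\xi_1=\alpha+\mu+d$, $\xi_2=\omega+\mu$, and $$R_0=\frac{\beta\bigl(\xi_2(\xi_1+\rho\eta_A)+\eta_C\phi\xi_1\bigr)}{\mu\bigl(\xi_2(\rho+\xi_1)+\phi\xi_1+\rho d\bigr)+\rho\omega d}.$$ If $R_0<1$, then the disease-free equilibrium $$\Sigma_0=\left(\frac{(\theta+\mu)\Lambda}{\mu(\theta+\psi+\mu)},0,0,0,\frac{\psi\Lambda}{\mu(\theta+\psi+\mu)}\right)$$ is globally asymptotically stable (in $\Omega_P$).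
   Context: The model describes HIV/AIDS transmission with pre-exposure prophylaxis (PrEP): $S$ susceptible, $I$ pre-AIDS HIV-infected, $C$ HIV-infected under antiretroviral treatment, $A$ with AIDS symptoms, $E$ susceptible individuals under PrEP. $R_0$ is the basic reproduction number. *)

theory Defs
  imports "HOL-Analysis.Analysis"
begin

text \<open>State vectors (S, I, C, A, E) are elements of real^5, components 1..5 in this order.\<close>

definition mk5 :: "real \<Rightarrow> real \<Rightarrow> real \<Rightarrow> real \<Rightarrow> real \<Rightarrow> real^5" where
  "mk5 a b c e f = (\<chi> i. if i = 1 then a else if i = 2 then b else if i = 3 then c
                          else if i = 4 then e else f)"

definition hiv_rhs ::
  "real \<Rightarrow> real \<Rightarrow> real \<Rightarrow> real \<Rightarrow> real \<Rightarrow> real \<Rightarrow> real \<Rightarrow> real \<Rightarrow> real \<Rightarrow> real \<Rightarrow> real \<Rightarrow> real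
   \<Rightarrow> real^5 \<Rightarrow> real^5" where
  "hiv_rhs Lam mu beta rho phi alpha omega d psi theta etaC etaA x =
     (let S = x$1; I = x$2; C = x$3; A = x$4; E = x$5;
          N = S + I + C + A + E;
          F = beta * (I + etaC * C + etaA * A) / N * S
      in mk5 (Lam - F - mu * S - psi * S + theta * E)
             (F - (rho + phi + mu) * I + alpha * A + omega * C)
             (phi * I - (omega + mu) * C)
             (rho * I - (alpha + mu + d) * A)
             (psi * S - (mu + theta) * E))"

definition Omega_P :: "real \<Rightarrow> real \<Rightarrow> real \<Rightarrow> real \<Rightarrow> (real^5) set" where
  "Omega_P Lam mu psi theta =
     {x. (\<forall>i. 0 \<le> x$i)
       \<and> x$1 \<le> (theta + mu) * Lam / (mu * (theta + psi + mu))
       \<and> x$5 \<le> psi * Lam / (mu * (theta + psi + mu))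
       \<and> x$1 + x$2 + x$3 + x$4 + x$5 \<le> Lam / mu}"

definition R0_hiv ::
  "real \<Rightarrow> real \<Rightarrow> real \<Rightarrow> real \<Rightarrow> real \<Rightarrow> real \<Rightarrow> real \<Rightarrow> real \<Rightarrow> real \<Rightarrow> real" where
  "R0_hiv mu beta rho phi alpha omega d etaC etaA =
     (let xi1 = alpha + mu + d; xi2 = omega + mu
      in beta * (xi2 * (xi1 + rho * etaA) + etaC * phi * xi1)
         / (mu * (xi2 * (rho + xi1) + phi * xi1 + rho * d) + rho * omega * d))"

definition ode_solution :: "('a::real_normed_vector \<Rightarrow> 'a) \<Rightarrow> (real \<Rightarrow> 'a) \<Rightarrow> bool" where
  "ode_solution f x \<longleftrightarrow> (\<forall>t\<ge>0. (x has_vector_derivative f (x t)) (at t within {0..}))"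

definition gas_in :: "('a::real_normed_vector \<Rightarrow> 'a) \<Rightarrow> 'a set \<Rightarrow> 'a \<Rightarrow> bool" where
  "gas_in f X p \<longleftrightarrow>
     p \<in> X \<and> f p = 0 \<and>
     (\<forall>\<epsilon>>0. \<exists>\<delta>>0. \<forall>x. ode_solution f x \<and> x 0 \<in> X \<and> dist (x 0) p < \<delta>
                         \<longrightarrow> (\<forall>t\<ge>0. dist (x t) p < \<epsilon>)) \<and>
     (\<forall>x. ode_solution f x \<and> x 0 \<in> X \<longrightarrow> (x \<longlongrightarrow> p) at_top)"

end

theory Submission
  imports Defs
begin

lemma exhaust_5: fixes x :: 5 shows "x = 1 \<or> x = 2 \<or> x = 3 \<or> x = 4 \<or> x = 5"
proof (induct x)
  case (of_int z)
  then have "z = 0 \<or> z = 1 \<or> z = 2 \<or> z = 3 \<or> z = 4" by fastforce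
  then show ?case by auto
qed

lemma forall_5: "(\<forall>i::5. P i) \<longleftrightarrow> P 1 \<and> P 2 \<and> P 3 \<and> P 4 \<and> P 5"
  by (metis exhaust_5)

lemma UNIV_5: "UNIV = {1, 2, 3, 4, 5::5}"
  using exhaust_5 by auto

lemma sum_5: "sum f (UNIV::5 set) = f 1 + f 2 + f 3 + f 4 + f 5"
  unfolding UNIV_5 by (simp add: ac_simps)

lemma mk5_nth[simp]:
  "mk5 a b c e f $ 1 = a" "mk5 a b c e f $ 2 = b" "mk5 a b c e f $ 3 = c"
  "mk5 a b c e f $ 4 = e" "mk5 a b c e f $ 5 = f"
  by (simp_all add: mk5_def)

lemma dist_sq5: "(dist x (y::real^5))^2 = (x$1-y$1)^2 + (x$2-y$2)^2 + (x$3-y$3)^2 + (x$4-y$4)^2 + (x$5-y$5)^2"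
  unfolding dist_norm norm_vec_def L2_set_def
  by (simp add: sum_5 sum_nonneg)

lemma vec5_eq: "(x::real^5) = y \<longleftrightarrow> x$1 = y$1 \<and> x$2 = y$2 \<and> x$3 = y$3 \<and> x$4 = y$4 \<and> x$5 = y$5"
  by (simp add: vec_eq_iff forall_5)

lemma gronwall_exp:
  fixes g g' :: "real \<Rightarrow> real"
  assumes "a \<le> b" "continuous_on {a..b} g"
    "\<And>t. a<t \<Longrightarrow> t<b \<Longrightarrow> (g has_real_derivative g' t) (at t)"
    "\<And>t. a<t \<Longrightarrow> t<b \<Longrightarrow> g' t \<le> k * g t"
  shows "g b \<le> g a * exp (k*(b-a))"
proof -
  define h where "h t = g t * exp (- (k*(t-a)))" for t
  have "h b \<le> h a"
  proof (rule DERIV_nonpos_imp_decreasing_open[OF assms(1)])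
    fix t assume t: "a < t" "t < b"
    have "(h has_real_derivative (g' t * exp (- (k*(t-a))) + g t * (exp (- (k*(t-a))) * (- k)))) (at t)"
      unfolding h_def
      by (auto intro!: derivative_eq_intros assms(3)[OF t])
    moreover have "g' t * exp (- (k*(t-a))) + g t * (exp (- (k*(t-a))) * (- k)) \<le> 0"
    proof -
      have "g' t * exp (- (k*(t-a))) + g t * (exp (- (k*(t-a))) * (- k)) = (g' t - k * g t) * exp (- (k*(t-a)))"
        by (simp add: algebra_simps)
      also have "\<dots> \<le> 0" using assms(4)[OF t] by (simp add: mult_nonpos_nonneg)
      finally show ?thesis .
    qed
    ultimately show "\<exists>y. (h has_real_derivative y) (at t) \<and> y \<le> 0" by blast
  next
    show "continuous_on {a..b} h" unfolding h_def
      by (intro continuous_intros assms(2))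
  qed
  hence "g b * exp (- (k*(b-a))) \<le> g a" by (simp add: h_def)
  hence "g b * exp (- (k*(b-a))) * exp (k*(b-a)) \<le> g a * exp (k*(b-a))"
    by (simp add: mult_right_mono)
  moreover have "g b * exp (- (k*(b-a))) * exp (k*(b-a)) = g b"
    by (simp add: mult.assoc exp_minus_inverse[unfolded mult.commute[of "exp _"]] mult.commute)
  ultimately show ?thesis by simp
qed

lemma deriv_negsq: "((\<lambda>z::real. (min z 0)^2) has_real_derivative 2 * min z 0) (at z)"
proof (cases "z = 0")
  case True
  have "((\<lambda>y. ((min y 0)^2 - (min 0 0)^2) / (y - 0)) \<longlongrightarrow> 0) (at (0::real))"
  proof (rule tendsto_sandwich[where f = "\<lambda>y. - \<bar>y\<bar>" and h = "\<lambda>y. \<bar>y\<bar>"])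
    have p: "- \<bar>y\<bar> \<le> ((min y 0)^2 - (min 0 0)^2) / (y - 0) \<and> ((min y 0)^2 - (min 0 0)^2) / (y - 0) \<le> \<bar>y\<bar>" for y :: real
    proof (cases "y < 0")
      case True
      then have "((min y 0)^2 - (min 0 0)^2) / (y - 0) = y" by (simp add: power2_eq_square min_def)
      then show ?thesis using True by simp
    next
      case False
      then show ?thesis by (simp add: min_def)
    qed
    show "\<forall>\<^sub>F y in at (0::real). - \<bar>y\<bar> \<le> ((min y 0)^2 - (min 0 0)^2) / (y - 0)"
      by (intro always_eventually allI) (use p in auto)
    show "\<forall>\<^sub>F y in at (0::real). ((min y 0)^2 - (min 0 0)^2) / (y - 0) \<le> \<bar>y\<bar>"
      by (intro always_eventually allI) (use p in auto)
    show "((\<lambda>y::real. - \<bar>y\<bar>) \<longlongrightarrow> 0) (at 0)"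
      by (intro tendsto_eq_intros) auto
    show "((\<lambda>y::real. \<bar>y\<bar>) \<longlongrightarrow> 0) (at 0)"
      by (intro tendsto_eq_intros) auto
  qed
  then show ?thesis using True by (simp add: has_field_derivative_iff)
next
  case False
  show ?thesis
  proof (cases "z < 0")
    case True
    have "((\<lambda>y. y^2) has_real_derivative 2 * z) (at z)"
      by (auto intro!: derivative_eq_intros)
    then have "((\<lambda>y. (min y 0)^2) has_real_derivative 2 * z) (at z)"
      by (rule has_field_derivative_transform_within_open[where S="{..<0}"]) (use True in auto)
    then show ?thesis using True by (simp add: min_def)
  next
    case False
    with \<open>z \<noteq> 0\<close> have zp: "z > 0" by simp
    have "((\<lambda>y. 0::real) has_real_derivative 0) (at z)"
      by (auto intro!: derivative_eq_intros)
    then have "((\<lambda>y. (min y 0)^2) has_real_derivative 0) (at z)"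
      by (rule has_field_derivative_transform_within_open[where S="{0<..}"]) (use zp in auto)
    then show ?thesis using zp by (simp add: min_def)
  qed
qed

lemma ode_cont:
  assumes "ode_solution f x"
  shows "continuous_on {0..} x"
proof -
  have "\<And>t. t \<in> {0..} \<Longrightarrow> continuous (at t within {0..}) x"
    using assms unfolding ode_solution_def
    by (auto intro: has_vector_derivative_continuous)
  thus ?thesis by (simp add: continuous_on_eq_continuous_within)
qed

lemma ode_comp_deriv:
  fixes x :: "real \<Rightarrow> real^'n"
  assumes "ode_solution f x" "t > 0"
  shows "((\<lambda>t. x t $ i) has_real_derivative f (x t) $ i) (at t)"
proof -
  have "(x has_vector_derivative f (x t)) (at t within {0..})"
    using assms unfolding ode_solution_def by auto
  moreover have "at t within {0..} = at t"
    using assms(2) by (intro at_within_interior) auto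
  ultimately have "(x has_vector_derivative f (x t)) (at t)" by simp
  from bounded_linear.has_vector_derivative[OF bounded_linear_vec_nth this, of i]
  show ?thesis by (simp add: has_real_derivative_iff_has_vector_derivative)
qed

lemma lyap_alg:
  fixes mu lam2 c psi B eP eE F L Ld A0 K0 :: real
  assumes mu: "mu > 0" and lam2: "lam2 \<ge> mu" and c: "c > 0" and B: "B \<ge> 0"
    and F0: "0 \<le> F" and FB: "F \<le> B * L" and L0: "L \<ge> 0" and Ld: "Ld \<le> - c * L"
    and A0: "A0 = 2 * psi^2 / (lam2 * mu) + 1" and K0: "K0 = A0 * B^2 / (mu * c) + 1"
  shows "2 * A0 * eP * (- mu * eP - F) + 2 * eE * (psi * eP - lam2 * eE) + 2 * K0 * L * Ld
    \<le> - (min (mu/2) c) * (A0 * eP^2 + eE^2 + K0 * L^2)"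
proof -
  have l2: "lam2 > 0" using mu lam2 by simp
  have A0p: "A0 \<ge> 1" unfolding A0 using l2 mu by simp
  have K0p: "K0 \<ge> 1" unfolding K0 using A0p mu c by simp
  define k where "k = min (mu/2) c"
  have k: "k \<le> mu/2" "k \<le> c" "k \<ge> 0" using mu c by (auto simp: k_def)
  have s1: "- 2 * eP * F \<le> mu * eP^2 + F^2 / mu"
  proof -
    have "0 \<le> (mu * eP + F)^2 / mu" using mu by simp
    also have "(mu * eP + F)^2 / mu = mu * eP^2 + 2 * eP * F + F^2 / mu"
      using mu by (simp add: power2_eq_square field_simps)
    finally show ?thesis by simp
  qed
  have s2: "2 * psi * eE * eP \<le> lam2 * eE^2 + psi^2 / lam2 * eP^2"
  proof -
    have "0 \<le> (lam2 * eE - psi * eP)^2 / lam2" using l2 by simp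
    also have "(lam2 * eE - psi * eP)^2 / lam2 = lam2 * eE^2 - 2 * psi * eE * eP + psi^2 / lam2 * eP^2"
      using l2 by (simp add: power2_eq_square field_simps)
    finally show ?thesis by simp
  qed
  have s3: "F^2 \<le> B^2 * L^2"
  proof -
    have "F^2 \<le> (B * L)^2" using F0 FB by (intro power_mono) auto
    then show ?thesis by (simp add: power_mult_distrib)
  qed
  have s4: "2 * K0 * L * Ld \<le> 2 * K0 * L * (- c * L)"
    using Ld K0p L0 by (intro mult_left_mono) auto
  have t1: "A0 * (- 2 * eP * F) \<le> A0 * (mu * eP^2 + F^2 / mu)" using s1 A0p by (intro mult_left_mono) auto
  have t3: "A0 / mu * F^2 \<le> A0 / mu * (B^2 * L^2)" using s3 A0p mu by (intro mult_left_mono) auto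
  have t3': "A0 / mu * (B^2 * L^2) = (K0 - 1) * c * L^2" unfolding K0 using mu c by (simp add: field_simps)
  have LHS: "2 * A0 * eP * (- mu * eP - F) + 2 * eE * (psi * eP - lam2 * eE) + 2 * K0 * L * Ld
     \<le> - 2 * A0 * mu * eP^2 + A0 * (mu * eP^2 + F^2 / mu) + (lam2 * eE^2 + psi^2 / lam2 * eP^2) - 2 * lam2 * eE^2
        + 2 * K0 * L * (- c * L)"
  proof -
    have "2 * A0 * eP * (- mu * eP - F) = - 2 * A0 * mu * eP^2 + A0 * (- 2 * eP * F)"
      by (simp add: power2_eq_square algebra_simps)
    moreover have "2 * eE * (psi * eP - lam2 * eE) = 2 * psi * eE * eP - 2 * lam2 * eE^2"
      by (simp add: power2_eq_square algebra_simps)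
    ultimately show ?thesis using t1 s2 s4 by linarith
  qed
  also have "\<dots> = - (A0 * mu - psi^2 / lam2) * eP^2 - lam2 * eE^2 + A0 / mu * F^2 - 2 * K0 * c * L^2"
    using mu by (simp add: power2_eq_square field_simps)
  also have "\<dots> \<le> - (A0 * mu - psi^2 / lam2) * eP^2 - lam2 * eE^2 + (K0 - 1) * c * L^2 - 2 * K0 * c * L^2"
    using t3 t3' by linarith
  also have "\<dots> = (- (A0 * mu - psi^2 / lam2) * eP^2) + (- lam2 * eE^2) + (- ((K0 + 1) * c) * L^2)"
    by (simp add: algebra_simps)
  also have "\<dots> \<le> (- (k * A0) * eP^2) + (- k * eE^2) + (- (k * K0) * L^2)"
  proof -
    define Q where "Q = 2 * psi^2 / (lam2 * mu)"
    define Z where "Z = psi^2 / lam2"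
    have A0Q: "A0 = Q + 1" unfolding A0 Q_def by simp
    have QZ: "mu * Q = 2 * Z" unfolding Q_def Z_def using mu by (simp add: field_simps)
    have Q0: "Q \<ge> 0" unfolding Q_def using mu l2 by simp
    have kQ: "k * Q \<le> (mu/2) * Q" using k Q0 by (intro mult_right_mono) auto
    have a: "k * A0 \<le> A0 * mu - psi^2 / lam2"
      unfolding Z_def[symmetric] A0Q using kQ QZ k by (simp add: algebra_simps)
    have b: "k \<le> lam2" using k lam2 mu by linarith
    have "k * K0 \<le> c * K0" using k K0p by (intro mult_right_mono) auto
    then have c': "k * K0 \<le> (K0 + 1) * c" using c by (simp add: algebra_simps)
    show ?thesis
    proof (intro add_mono)
      show "- (A0 * mu - psi^2 / lam2) * eP^2 \<le> - (k * A0) * eP^2" using a by (intro mult_right_mono) auto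
      show "- lam2 * eE^2 \<le> - k * eE^2" using b by (intro mult_right_mono) auto
      show "- ((K0 + 1) * c) * L^2 \<le> - (k * K0) * L^2" using c' by (intro mult_right_mono) auto
    qed
  qed
  also have "\<dots> = - k * (A0 * eP^2 + eE^2 + K0 * L^2)" by (simp add: algebra_simps)
  finally show ?thesis by (simp add: k_def)
qed

lemma clow_alg:
  fixes P Q L z A0 K0 :: real
  assumes "P \<ge> 0" "Q \<ge> 0" "L \<ge> 0" "z \<ge> 0" "A0 \<ge> 1" "K0 \<ge> 1"
  shows "2*P + 3*Q + z*L \<le> (3+z)*(A0*P + Q + K0*L)"
proof -
  have e: "(3+z)*(A0*P + Q + K0*L) = 3*(A0*P) + 3*Q + 3*(K0*L) + z*(A0*P) + z*Q + z*(K0*L)"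
    by (simp add: algebra_simps)
  have a: "A0*P \<ge> 1*P" using assms by (intro mult_right_mono) auto
  have b: "z*(K0*L) \<ge> z*(1*L)" using assms by (intro mult_left_mono mult_right_mono) auto
  have c: "z*(A0*P) \<ge> 0" "z*Q \<ge> 0" "K0*L \<ge> 0" using assms by auto
  show ?thesis unfolding e using a b c assms(1) by linarith
qed

lemma sq3: "((a::real) + b + c)^2 \<le> 3 * (a^2 + b^2 + c^2)"
proof -
  have "0 \<le> (a-b)^2 + (a-c)^2 + (b-c)^2" by simp
  thus ?thesis by (simp add: power2_eq_square algebra_simps)
qed

lemma sq2: "((a::real) + b)^2 \<le> 2 * (a^2 + b^2)"
proof -
  have "0 \<le> (a-b)^2" by simp
  thus ?thesis by (simp add: power2_eq_square algebra_simps)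
qed

lemma sq2m: "((a::real) - b)^2 \<le> 2 * (a^2 + b^2)"
  using sq2[of a "-b"] by simp

lemma sq3nn: "(a::real) \<ge> 0 \<Longrightarrow> b \<ge> 0 \<Longrightarrow> c \<ge> 0 \<Longrightarrow> a^2 + b^2 + c^2 \<le> (a + b + c)^2"
  by (simp add: power2_eq_square algebra_simps)

lemma neg_mult_bound:
  fixes z fz K u :: real
  assumes "z < 0" "fz \<ge> - K * u" "- min z 0 \<le> u" "K \<ge> 0" "u \<ge> 0"
  shows "min z 0 * fz \<le> K * u^2"
proof -
  have zu: "- z \<le> u" using assms(1,3) by simp
  show ?thesis
  proof (cases "fz \<ge> 0")
    case True
    then have "min z 0 * fz \<le> 0" using assms(1) by (simp add: mult_nonpos_nonneg)
    also have "0 \<le> K * u^2" using assms by simp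
    finally show ?thesis .
  next
    case False
    have "min z 0 * fz = (-z) * (- fz)" using assms(1) by simp
    also have "\<dots> \<le> u * (K * u)"
      by (rule mult_mono) (use assms zu False in auto)
    finally show ?thesis by (simp add: power2_eq_square algebra_simps)
  qed
qed

lemma sq5_bound:
  fixes a b c e g :: real
  shows "(a+b+c+e+g)^2 \<le> 5 * (a^2+b^2+c^2+e^2+g^2)"
proof -
  have "0 \<le> (a-b)^2 + (a-c)^2 + (a-e)^2 + (a-g)^2 + (b-c)^2 + (b-e)^2 + (b-g)^2 + (c-e)^2 + (c-g)^2 + (e-g)^2"
    by simp
  thus ?thesis by (simp add: power2_eq_square algebra_simps)
qed

lemma sum5_lem:
  fixes a1 a2 a3 a4 a5 k Wv :: real
  shows "a1 \<le> k \<Longrightarrow> a2 \<le> k \<Longrightarrow> a3 \<le> k \<Longrightarrow> a4 \<le> k \<Longrightarrow> a5 \<le> k \<Longrightarrow> k \<le> 5 * Wv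
    \<Longrightarrow> 2 * (a1 + a2 + a3 + a4 + a5) \<le> 50 * Wv"
proof -
  assume "a1 \<le> k" "a2 \<le> k" "a3 \<le> k" "a4 \<le> k" "a5 \<le> k" and kw: "k \<le> 5 * Wv"
  then have "a1 + a2 + a3 + a4 + a5 \<le> 5 * k" by linarith
  moreover have "5 * k \<le> 25 * Wv" using kw by linarith
  ultimately have s: "a1 + a2 + a3 + a4 + a5 \<le> 25 * Wv" by linarith
  from mult_left_mono[OF s, of 2] show ?thesis by simp
qed

locale hiv =
  fixes Lam mu beta rho phi alpha omega d psi theta etaC etaA :: real
  assumes Lam: "Lam > 0" and mu: "mu > 0" and beta: "beta > 0" and rho: "rho > 0"
    and phi: "phi > 0" and alpha: "alpha > 0" and omega: "omega > 0"
    and d: "d \<ge> 0" and psi: "psi \<ge> 0" and theta: "theta \<ge> 0"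
    and etaC: "0 < etaC" "etaC \<le> 1" and etaA: "etaA \<ge> 1"
    and R0: "R0_hiv mu beta rho phi alpha omega d etaC etaA < 1"
begin

abbreviation "f \<equiv> hiv_rhs Lam mu beta rho phi alpha omega d psi theta etaC etaA"

definition NN :: "real^5 \<Rightarrow> real" where "NN y = y$1 + y$2 + y$3 + y$4 + y$5"
definition YY :: "real^5 \<Rightarrow> real" where "YY y = y$2 + etaC * y$3 + etaA * y$4"
definition FF :: "real^5 \<Rightarrow> real" where "FF y = beta * YY y / NN y * y$1"

lemma f_nth:
  "f y $ 1 = Lam - FF y - mu * y$1 - psi * y$1 + theta * y$5"
  "f y $ 2 = FF y - (rho + phi + mu) * y$2 + alpha * y$4 + omega * y$3"
  "f y $ 3 = phi * y$2 - (omega + mu) * y$3"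
  "f y $ 4 = rho * y$2 - (alpha + mu + d) * y$4"
  "f y $ 5 = psi * y$1 - (mu + theta) * y$5"
  by (simp_all add: hiv_rhs_def Let_def FF_def YY_def NN_def)

definition negu :: "real^5 \<Rightarrow> real" where
  "negu y = - (min (y$1) 0 + min (y$2) 0 + min (y$3) 0 + min (y$4) 0 + min (y$5) 0)"

definition ww :: "real^5 \<Rightarrow> real" where
  "ww y = (min (y$1) 0)^2 + (min (y$2) 0)^2 + (min (y$3) 0)^2 + (min (y$4) 0)^2 + (min (y$5) 0)^2"

definition KK :: "real \<Rightarrow> real" where
  "KK R = beta * (1 + etaC + etaA) * R + alpha + omega + phi + rho + psi + theta"

lemma KK_nonneg: "R \<ge> 0 \<Longrightarrow> KK R \<ge> 0"
  unfolding KK_def using beta etaC etaA alpha omega phi rho psi theta by simp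

lemma qp:
  assumes good: "y = 0 \<or> (NN y > 0 \<and> (\<forall>j. \<bar>y$j\<bar> \<le> R * NN y))" and R: "R \<ge> 0"
  shows "2 * (min (y$1) 0 * f y $ 1 + min (y$2) 0 * f y $ 2 + min (y$3) 0 * f y $ 3
            + min (y$4) 0 * f y $ 4 + min (y$5) 0 * f y $ 5) \<le> 50 * (KK R * ww y)"
proof (cases "y = 0")
  case True
  then show ?thesis by (simp add: ww_def)
next
  case False
  with good have N: "NN y > 0" and bnd: "\<And>j. \<bar>y$j\<bar> \<le> R * NN y" by auto
  define u where "u = negu y"
  define a where "a = 1 + etaC + etaA"
  have a0: "a \<ge> 0" using etaC etaA by (simp add: a_def)
  have nn: "0 \<le> - min (y$k) 0" for k by simp
  have lu: "- min (y$j) 0 \<le> u" for j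
  proof -
    have "j = 1 \<or> j = 2 \<or> j = 3 \<or> j = 4 \<or> j = 5" by (rule exhaust_5)
    then show ?thesis unfolding u_def negu_def
      using nn[of 1] nn[of 2] nn[of 3] nn[of 4] nn[of 5] by (elim disjE; hypsubst; linarith)
  qed
  have u0: "u \<ge> 0" using lu[of 1] by (simp add: min_def split: if_splits)
  have ge: "y$j \<ge> - u" for j using lu[of j] by (simp add: min_def split: if_splits)
  have Ylow: "YY y \<ge> - a * u"
  proof -
    have "etaC * y$3 \<ge> etaC * (-u)" using ge[of 3] etaC by (intro mult_left_mono) auto
    moreover have "etaA * y$4 \<ge> etaA * (-u)" using ge[of 4] etaA by (intro mult_left_mono) auto
    ultimately show ?thesis using ge[of 2] by (simp add: YY_def a_def algebra_simps)
  qed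
  have Yabs: "\<bar>YY y\<bar> \<le> a * R * NN y"
  proof -
    have "\<bar>YY y\<bar> \<le> \<bar>y$2\<bar> + etaC * \<bar>y$3\<bar> + etaA * \<bar>y$4\<bar>"
    proof -
      have "\<bar>YY y\<bar> \<le> \<bar>y$2\<bar> + \<bar>etaC * y$3\<bar> + \<bar>etaA * y$4\<bar>"
        unfolding YY_def by (rule order_trans[OF abs_triangle_ineq add_right_mono[OF abs_triangle_ineq]])
      then show ?thesis using etaC etaA by (simp add: abs_mult)
    qed
    also have "\<dots> \<le> R * NN y + etaC * (R * NN y) + etaA * (R * NN y)"
      using bnd[of 2] bnd[of 3] bnd[of 4] etaC etaA
      by (intro add_mono mult_left_mono) auto
    finally show ?thesis by (simp add: a_def algebra_simps)
  qed
  define q where "q = y$1 / NN y"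
  have FFq: "FF y = beta * (YY y * q)" unfolding FF_def q_def by simp
  have qR: "\<bar>q\<bar> \<le> R" using bnd[of 1] N unfolding q_def by (simp add: abs_div divide_le_eq)
  have c1: "YY y * q \<le> a * R * u" if "y$1 < 0"
  proof -
    have q0: "q \<le> 0" using that N unfolding q_def by (simp add: divide_nonpos_pos)
    have "YY y * q \<le> (- a * u) * q" using Ylow q0 by (rule mult_right_mono_neg)
    also have "\<dots> = (a * u) * (- q)" by simp
    also have "\<dots> \<le> (a * u) * R" using qR q0 a0 u0 by (intro mult_left_mono) auto
    finally show ?thesis by (simp add: algebra_simps)
  qed
  have c2: "YY y * q \<ge> - (a * R * u)"
  proof (cases "y$1 \<ge> 0")
    case True
    have q0: "q \<ge> 0" using True N unfolding q_def by simp
    have "(- a * u) * q \<le> YY y * q" using Ylow q0 by (rule mult_right_mono)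
    moreover have "(a * u) * q \<le> (a * u) * R" using qR q0 a0 u0 by (intro mult_left_mono) auto
    ultimately show ?thesis by (simp add: algebra_simps)
  next
    case False
    have "\<bar>YY y * q\<bar> = \<bar>YY y\<bar> * \<bar>y$1\<bar> / NN y" unfolding q_def using N by (simp add: abs_mult abs_div)
    also have "\<dots> \<le> (a * R * NN y) * \<bar>y$1\<bar> / NN y"
      using Yabs N by (intro divide_right_mono mult_right_mono) auto
    also have "\<dots> = a * R * \<bar>y$1\<bar>" using N by simp
    also have "\<dots> \<le> a * R * u" using lu[of 1] False a0 R
      by (intro mult_left_mono) (auto simp: min_def)
    finally show ?thesis by linarith
  qed
  have K: "KK R \<ge> 0" using KK_nonneg[OF R] .
  have bA: "beta * (a * R * u) \<le> KK R * u - (alpha + omega + phi + rho + psi + theta) * u"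
    unfolding KK_def a_def by (simp add: algebra_simps)
  have KKu: "KK R * u = beta * (a*R*u) + alpha*u + omega*u + phi*u + rho*u + psi*u + theta*u"
    by (simp add: KK_def a_def algebra_simps)
  have bRu: "0 \<le> beta * (a*R*u)" using beta a0 R u0 by simp
  have pos: "alpha * u \<ge> 0" "omega * u \<ge> 0" "phi * u \<ge> 0" "rho * u \<ge> 0" "psi * u \<ge> 0" "theta * u \<ge> 0"
    using alpha omega phi rho psi theta u0 by auto
  have i1: "min (y$1) 0 * f y $ 1 \<le> KK R * u^2"
  proof (cases "y$1 < 0")
    case True
    have "beta * (YY y * q) \<le> beta * (a * R * u)" using c1[OF True] beta by simp
    moreover have "theta * y$5 \<ge> theta * (-u)" using ge[of 5] theta by (intro mult_left_mono) auto
    moreover have "- (mu + psi) * y$1 \<ge> 0" using True mu psi by (intro mult_nonpos_nonpos) auto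
    ultimately have "f y $ 1 \<ge> - KK R * u" unfolding f_nth FFq using Lam bA pos by (simp add: algebra_simps)
    then show ?thesis using neg_mult_bound[OF True _ lu K u0] by simp
  qed (use K in simp)
  have i2: "min (y$2) 0 * f y $ 2 \<le> KK R * u^2"
  proof (cases "y$2 < 0")
    case True
    have "beta * (YY y * q) \<ge> beta * (- (a * R * u))" using c2 beta by (intro mult_left_mono) auto
    moreover have "alpha * y$4 \<ge> alpha * (-u)" using ge[of 4] alpha by (intro mult_left_mono) auto
    moreover have "omega * y$3 \<ge> omega * (-u)" using ge[of 3] omega by (intro mult_left_mono) auto
    moreover have "- (rho + phi + mu) * y$2 \<ge> 0" using True mu phi rho by (intro mult_nonpos_nonpos) auto
    ultimately have "f y $ 2 \<ge> - KK R * u" unfolding f_nth FFq using bA pos by (simp add: algebra_simps)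
    then show ?thesis using neg_mult_bound[OF True _ lu K u0] by simp
  qed (use K in simp)
  have i3: "min (y$3) 0 * f y $ 3 \<le> KK R * u^2"
  proof (cases "y$3 < 0")
    case True
    have "phi * y$2 \<ge> phi * (-u)" using ge[of 2] phi by (intro mult_left_mono) auto
    moreover have "- (omega + mu) * y$3 \<ge> 0" using True mu omega by (intro mult_nonpos_nonpos) auto
    ultimately have "f y $ 3 \<ge> - KK R * u" unfolding f_nth
      using pos KKu bRu by (simp add: algebra_simps)
    then show ?thesis using neg_mult_bound[OF True _ lu K u0] by simp
  qed (use K in simp)
  have i4: "min (y$4) 0 * f y $ 4 \<le> KK R * u^2"
  proof (cases "y$4 < 0")
    case True
    have "rho * y$2 \<ge> rho * (-u)" using ge[of 2] rho by (intro mult_left_mono) auto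
    moreover have "- (alpha + mu + d) * y$4 \<ge> 0" using True mu alpha d by (intro mult_nonpos_nonpos) auto
    ultimately have "f y $ 4 \<ge> - KK R * u" unfolding f_nth
      using pos KKu bRu by (simp add: algebra_simps)
    then show ?thesis using neg_mult_bound[OF True _ lu K u0] by simp
  qed (use K in simp)
  have i5: "min (y$5) 0 * f y $ 5 \<le> KK R * u^2"
  proof (cases "y$5 < 0")
    case True
    have "psi * y$1 \<ge> psi * (-u)" using ge[of 1] psi by (intro mult_left_mono) auto
    moreover have "- (mu + theta) * y$5 \<ge> 0" using True mu theta by (intro mult_nonpos_nonpos) auto
    ultimately have "f y $ 5 \<ge> - KK R * u" unfolding f_nth
      using pos KKu bRu by (simp add: algebra_simps)
    then show ?thesis using neg_mult_bound[OF True _ lu K u0] by simp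
  qed (use K in simp)
  have "u^2 = (min (y$1) 0 + min (y$2) 0 + min (y$3) 0 + min (y$4) 0 + min (y$5) 0)^2"
    unfolding u_def negu_def by (rule power2_minus)
  then have "u^2 \<le> 5 * ww y"
    unfolding ww_def using sq5_bound[of "min (y$1) 0" "min (y$2) 0" "min (y$3) 0" "min (y$4) 0" "min (y$5) 0"]
    by (simp only:)
  then have "KK R * u^2 \<le> KK R * (5 * ww y)" using K by (rule mult_left_mono)
  then have "KK R * u^2 \<le> 5 * (KK R * ww y)" by simp
  then show ?thesis by (rule sum5_lem[OF i1 i2 i3 i4 i5])
qed

end

context hiv begin

definition good :: "real \<Rightarrow> real^5 \<Rightarrow> bool" where
  "good R y \<longleftrightarrow> y = 0 \<or> (NN y > 0 \<and> (\<forall>j. \<bar>y$j\<bar> \<le> R * NN y))"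

lemma NN_lip: "\<bar>NN y - NN z\<bar> \<le> 5 * norm (y - z)"
proof -
  have "NN y - NN z = (y-z)$1 + (y-z)$2 + (y-z)$3 + (y-z)$4 + (y-z)$5"
    by (simp add: NN_def)
  moreover have c: "\<bar>(y-z)$j\<bar> \<le> norm (y - z)" for j by (rule component_le_norm_cart)
  ultimately show ?thesis
    using c[of 1] c[of 2] c[of 3] c[of 4] c[of 5] by linarith
qed

lemma f_zero: "f 0 = mk5 Lam 0 0 0 0"
  unfolding vec5_eq by (simp add: f_nth FF_def NN_def YY_def)

lemma good_near:
  assumes sol: "ode_solution f x" and T: "T \<ge> 0" and nn: "\<forall>i. 0 \<le> x T $ i"
  shows "\<exists>h>0. \<exists>R\<ge>0. \<forall>t\<in>{T..T+h}. good R (x t)"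
proof (cases "NN (x T) > 0")
  case True
  define N0 where "N0 = NN (x T)"
  have N0: "N0 > 0" using True by (simp add: N0_def)
  have cont: "continuous (at T within {0..}) x"
    using ode_cont[OF sol] T by (simp add: continuous_on_eq_continuous_within)
  define e where "e = min 1 (N0/10)"
  have e: "e > 0" using N0 by (simp add: e_def)
  obtain \<delta> where \<delta>: "\<delta> > 0" and close: "\<And>t. t \<in> {0..} \<Longrightarrow> dist t T < \<delta> \<Longrightarrow> dist (x t) (x T) < e"
    using cont e unfolding continuous_within_eps_delta by blast
  define R where "R = 2 * (norm (x T) + 1) / N0"
  have R: "R \<ge> 0" using N0 by (simp add: R_def)
  have "\<forall>t\<in>{T..T+\<delta>/2}. good R (x t)"
  proof
    fix t assume t: "t \<in> {T..T+\<delta>/2}"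
    have d: "dist (x t) (x T) < e" using t T \<delta> by (intro close) (auto simp: dist_real_def)
    then have d': "norm (x t - x T) < e" by (simp add: dist_norm)
    have "\<bar>NN (x t) - N0\<bar> \<le> 5 * norm (x t - x T)" unfolding N0_def by (rule NN_lip)
    also have "\<dots> < 5 * e" using d' by simp
    also have "\<dots> \<le> N0/2" unfolding e_def by linarith
    finally have Nt: "NN (x t) > N0/2" by linarith
    have "\<bar>x t $ j\<bar> \<le> R * NN (x t)" for j
    proof -
      have "\<bar>x t $ j\<bar> \<le> norm (x t)" by (rule component_le_norm_cart)
      also have "\<dots> \<le> norm (x T) + norm (x t - x T)" by (rule norm_triangle_sub)
      also have "\<dots> \<le> norm (x T) + 1" using d' e_def by linarith
      also have "\<dots> = R * (N0/2)" using N0 by (simp add: R_def)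
      also have "\<dots> \<le> R * NN (x t)" using Nt R by (intro mult_left_mono) auto
      finally show ?thesis .
    qed
    then show "good R (x t)" using Nt N0 by (simp add: good_def)
  qed
  then show ?thesis using R \<delta> by (intro exI[of _ "\<delta>/2"]) auto
next
  case False
  have "NN (x T) \<ge> 0" using nn by (simp add: NN_def forall_5)
  with False have "NN (x T) = 0" by simp
  then have xT: "x T = 0" using nn unfolding vec5_eq NN_def forall_5 by simp
  have der: "(x has_derivative (\<lambda>h. h *\<^sub>R f (x T))) (at T within {0..})"
    using sol T unfolding ode_solution_def has_vector_derivative_def by auto
  define v where "v = mk5 Lam 0 0 0 0"
  have fxT: "f (x T) = v" using xT f_zero v_def by simp
  define e where "e = Lam / 10"
  have e: "e > 0" using Lam by (simp add: e_def)
  obtain \<delta> where \<delta>: "\<delta> > 0" and approx: "\<And>t. t \<in> {0..} \<Longrightarrow> norm (t - T) < \<delta> \<Longrightarrow>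
      norm (x t - x T - (t - T) *\<^sub>R v) \<le> e * norm (t - T)"
    using der e unfolding has_derivative_within_alt fxT by blast
  have "\<forall>t\<in>{T..T+\<delta>/2}. good 4 (x t)"
  proof
    fix t assume t: "t \<in> {T..T+\<delta>/2}"
    define s where "s = t - T"
    have s0: "s \<ge> 0" using t by (simp add: s_def)
    have ap: "norm (x t - s *\<^sub>R v) \<le> e * s"
      using approx[of t] t T \<delta> xT s0 by (simp add: s_def)
    have comp: "\<bar>(x t - s *\<^sub>R v) $ j\<bar> \<le> e * s" for j
      using component_le_norm_cart[of "x t - s *\<^sub>R v" j] ap by linarith
    have c1: "\<bar>x t $ 1 - s * Lam\<bar> \<le> e * s" using comp[of 1] by (simp add: v_def)
    have cj: "\<bar>x t $ j\<bar> \<le> e * s" if "j \<noteq> 1" for j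
    proof -
      have "v $ j = 0" using that exhaust_5[of j] by (auto simp: v_def)
      then show ?thesis using comp[of j] by simp
    qed
    have c2: "\<bar>x t $ 2\<bar> \<le> e * s" "\<bar>x t $ 3\<bar> \<le> e * s" "\<bar>x t $ 4\<bar> \<le> e * s" "\<bar>x t $ 5\<bar> \<le> e * s"
      by (auto intro!: cj)
    show "good 4 (x t)"
    proof (cases "s = 0")
      case True
      then have "x t = 0" using ap by simp
      then show ?thesis by (simp add: good_def)
    next
      case False
      then have sp: "s > 0" using s0 by simp
      have l1: "x t $ 1 \<ge> Lam * s - e * s" using c1 by (simp add: abs_le_iff mult.commute)
      have l2: "x t $ 2 \<ge> - (e * s)" "x t $ 3 \<ge> - (e * s)" "x t $ 4 \<ge> - (e * s)" "x t $ 5 \<ge> - (e * s)"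
        using c2 by (simp_all add: abs_le_iff)
      have es: "e * s = Lam * s / 10" by (simp add: e_def)
      have Nt: "NN (x t) \<ge> Lam * s / 2"
        using l1 l2 es unfolding NN_def by linarith
      have "Lam * s / 2 > 0" using Lam sp by simp
      then have Np: "NN (x t) > 0" using Nt by linarith
      have "\<bar>x t $ j\<bar> \<le> 4 * NN (x t)" for j
      proof -
        have L0: "0 \<le> Lam * s" using Lam sp by simp
        have a1: "\<bar>x t $ 1\<bar> \<le> Lam * s + e * s"
          using c1 L0 by (simp add: abs_le_iff mult.commute)
        from L0 have "\<bar>x t $ j\<bar> \<le> Lam * s + e * s" if "j \<noteq> 1"
          using cj[OF that] by linarith
        then have "\<bar>x t $ j\<bar> \<le> Lam * s + e * s"
          using a1 by (cases "j = 1") auto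
        also have "\<dots> \<le> 4 * (Lam * s / 2)" using Lam sp by (simp add: e_def)
        also have "\<dots> \<le> 4 * NN (x t)" using Nt by simp
        finally show ?thesis .
      qed
      then show ?thesis using Np by (simp add: good_def)
    qed
  qed
  then show ?thesis using \<delta> by (intro exI[of _ "\<delta>/2"] conjI exI[of _ "4::real"]) auto
qed

lemma ww_deriv:
  assumes sol: "ode_solution f x" and t: "t > 0"
  shows "((\<lambda>t. ww (x t)) has_real_derivative
      2 * (min (x t $ 1) 0 * f (x t) $ 1 + min (x t $ 2) 0 * f (x t) $ 2 + min (x t $ 3) 0 * f (x t) $ 3
            + min (x t $ 4) 0 * f (x t) $ 4 + min (x t $ 5) 0 * f (x t) $ 5)) (at t)"
proof -
  have c: "((\<lambda>t. (min (x t $ i) 0)^2) has_real_derivative (2 * min (x t $ i) 0) * f (x t) $ i) (at t)" for i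
    by (rule DERIV_chain2[OF deriv_negsq ode_comp_deriv[OF sol t]])
  have "((\<lambda>t. ww (x t)) has_real_derivative
      (2 * min (x t $ 1) 0) * f (x t) $ 1 + (2 * min (x t $ 2) 0) * f (x t) $ 2 + (2 * min (x t $ 3) 0) * f (x t) $ 3
            + (2 * min (x t $ 4) 0) * f (x t) $ 4 + (2 * min (x t $ 5) 0) * f (x t) $ 5) (at t)"
    unfolding ww_def by (intro DERIV_add c)
  then show ?thesis by (simp add: algebra_simps)
qed

lemma ww_cont:
  assumes sol: "ode_solution f x" and "S \<subseteq> {0..}"
  shows "continuous_on S (\<lambda>t. ww (x t))"
proof -
  have "continuous_on S x" using ode_cont[OF sol] assms(2) by (rule continuous_on_subset)
  then show ?thesis unfolding ww_def by (intro continuous_intros)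
qed

lemma ww_zero: "ww y = 0 \<Longrightarrow> (\<forall>i. 0 \<le> y $ i)"
proof -
  assume "ww y = 0"
  moreover have "(min (y$i) 0)^2 \<ge> 0" for i by simp
  ultimately have "(min (y$i) 0)^2 = 0" if "i \<in> {1,2,3,4,5}" for i
    using that unfolding ww_def by (smt (verit) insert_iff singletonD)
  then have "min (y$i) 0 = 0" for i using UNIV_5 by auto
  then show ?thesis by (metis min.absorb_iff2 min.commute)
qed

lemma ww_nn: "(\<forall>i. 0 \<le> y $ i) \<Longrightarrow> ww y = 0"
  by (simp add: ww_def)

lemma local_nonneg:
  assumes sol: "ode_solution f x" and T: "T \<ge> 0" and nn: "\<forall>i. 0 \<le> x T $ i"
  shows "\<exists>h>0. \<forall>t\<in>{T..T+h}. \<forall>i. 0 \<le> x t $ i"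
proof -
  obtain h R where h: "h > 0" and R: "R \<ge> 0" and g: "\<And>t. t\<in>{T..T+h} \<Longrightarrow> good R (x t)"
    using good_near[OF sol T nn] by blast
  have "ww (x b) = 0" if b: "b \<in> {T..T+h}" for b
  proof -
    have "ww (x b) \<le> ww (x T) * exp ((50 * KK R) * (b - T))"
    proof (rule gronwall_exp)
      show "T \<le> b" using b by simp
      show "continuous_on {T..b} (\<lambda>t. ww (x t))" using T by (intro ww_cont[OF sol]) auto
      fix t assume t: "T < t" "t < b"
      show "((\<lambda>t. ww (x t)) has_real_derivative
        2 * (min (x t $ 1) 0 * f (x t) $ 1 + min (x t $ 2) 0 * f (x t) $ 2 + min (x t $ 3) 0 * f (x t) $ 3
            + min (x t $ 4) 0 * f (x t) $ 4 + min (x t $ 5) 0 * f (x t) $ 5)) (at t)"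
        using t T by (intro ww_deriv[OF sol]) auto
      have "good R (x t)" using t b by (intro g) auto
      then show "2 * (min (x t $ 1) 0 * f (x t) $ 1 + min (x t $ 2) 0 * f (x t) $ 2 + min (x t $ 3) 0 * f (x t) $ 3
            + min (x t $ 4) 0 * f (x t) $ 4 + min (x t $ 5) 0 * f (x t) $ 5) \<le> (50 * KK R) * ww (x t)"
        using qp[OF _ R] unfolding good_def by (simp add: mult.assoc)
    qed
    then have "ww (x b) \<le> 0" using ww_nn[OF nn] by simp
    moreover have "ww (x b) \<ge> 0" by (simp add: ww_def)
    ultimately show ?thesis by simp
  qed
  then show ?thesis using h ww_zero by blast
qed

lemma invariance:
  assumes sol: "ode_solution f x" and x0: "\<forall>i. 0 \<le> x 0 $ i"
  shows "\<forall>t\<ge>0. \<forall>i. 0 \<le> x t $ i"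
proof (rule ccontr)
  assume contra: "\<not> ?thesis"
  define B where "B = {t. 0 \<le> t \<and> \<not> (\<forall>i. 0 \<le> x t $ i)}"
  have Bne: "B \<noteq> {}" using contra by (auto simp: B_def)
  have bdd: "bdd_below B" by (auto simp: B_def bdd_below_def)
  define T where "T = Inf B"
  have T0: "T \<ge> 0" unfolding T_def using Bne by (intro cInf_greatest) (auto simp: B_def)
  have before: "\<forall>i. 0 \<le> x s $ i" if "0 \<le> s" "s < T" for s
  proof (rule ccontr)
    assume "\<not> (\<forall>i. 0 \<le> x s $ i)"
    then have "s \<in> B" using that by (auto simp: B_def)
    then have "T \<le> s" unfolding T_def using bdd by (rule cInf_lower)
    then show False using that by simp
  qed
  have nnT: "\<forall>i. 0 \<le> x T $ i"
  proof (cases "T = 0")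
    case True then show ?thesis using x0 by simp
  next
    case False
    then have Tp: "T > 0" using T0 by simp
    show ?thesis
    proof (rule ccontr)
      assume "\<not> ?thesis"
      then obtain i where neg: "x T $ i < 0" by (auto simp: not_le)
      have "continuous (at T within {0..}) x"
        using ode_cont[OF sol] T0 by (simp add: continuous_on_eq_continuous_within)
      then have "continuous (at T within {0..}) (\<lambda>t. x t $ i)" by (rule continuous_component)
      then obtain \<delta> where \<delta>: "\<delta> > 0" and cl: "\<And>t. t \<in> {0..} \<Longrightarrow> dist t T < \<delta> \<Longrightarrow> dist (x t $ i) (x T $ i) < - x T $ i"
        using neg unfolding continuous_within_eps_delta by (metis neg_0_less_iff_less)
      define s where "s = max 0 (T - \<delta>/2)"
      have s: "0 \<le> s" "s < T" "dist s T < \<delta>" using Tp \<delta> by (auto simp: s_def dist_real_def)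
      have "dist (x s $ i) (x T $ i) < - x T $ i" using s by (intro cl) auto
      then have "x s $ i < 0" by (simp add: dist_real_def)
      with before[OF s(1,2)] show False by (meson not_le)
    qed
  qed
  obtain h where h: "h > 0" and nnh: "\<And>t. t\<in>{T..T+h} \<Longrightarrow> \<forall>i. 0 \<le> x t $ i"
    using local_nonneg[OF sol T0 nnT] by blast
  have "T + h \<le> Inf B"
  proof (rule cInf_greatest[OF Bne])
    fix b assume b: "b \<in> B"
    show "T + h \<le> b"
    proof (rule ccontr)
      assume "\<not> T + h \<le> b"
      then have "\<forall>i. 0 \<le> x b $ i"
        using b before nnh by (cases "b < T") (auto simp: B_def)
      then show False using b by (auto simp: B_def)
    qed
  qed
  then show False using h by (simp add: T_def)
qed

end

context hiv begin

definition "xi1 = alpha + mu + d"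
definition "xi2 = omega + mu"
definition "g0 = (rho + phi + mu) - beta - phi * (beta * etaC + omega) / xi2 - rho * (beta * etaA + alpha) / xi1"
definition "sl = g0 / (2 * (phi + rho))"
definition "aa = (beta * etaC + omega) / xi2 + sl"
definition "bb = (beta * etaA + alpha) / xi1 + sl"
definition "cc = min (g0/2) (min (sl * xi2 / aa) (sl * xi1 / bb))"
definition "LL y = y$2 + aa * y$3 + bb * y$4"

lemma xi_pos: "xi1 > 0" "xi2 > 0"
  using alpha mu d omega by (auto simp: xi1_def xi2_def)

lemma g0_pos: "g0 > 0"
proof -
  define Num where "Num = xi2 * (xi1 + rho * etaA) + etaC * phi * xi1"
  define Den where "Den = mu * (xi2 * (rho + xi1) + phi * xi1 + rho * d) + rho * omega * d"
  have Den: "Den > 0" unfolding Den_def using mu rho phi d omega xi_pos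
    by (intro add_pos_nonneg mult_pos_pos) (auto intro!: add_pos_nonneg mult_nonneg_nonneg)
  have "beta * Num / Den < 1" using R0 unfolding R0_hiv_def Let_def Num_def Den_def xi1_def xi2_def by simp
  then have lt: "beta * Num < Den" using Den by (simp add: divide_less_eq)
  have "g0 * xi1 * xi2 = (rho + phi + mu) * xi1 * xi2 - beta * xi1 * xi2 - phi * (beta * etaC + omega) * xi1 - rho * (beta * etaA + alpha) * xi2"
    unfolding g0_def using xi_pos by (simp add: field_simps)
  also have "\<dots> = Den - beta * Num"
    unfolding Den_def Num_def xi1_def xi2_def by (simp add: algebra_simps)
  finally have "g0 * xi1 * xi2 > 0" using lt by simp
  then show ?thesis using xi_pos by (simp add: zero_less_mult_iff)
qed

lemma sl_pos: "sl > 0" using g0_pos phi rho by (simp add: sl_def)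
lemma aa_pos: "aa > 0"
proof -
  have "(beta * etaC + omega) / xi2 > 0" using xi_pos beta etaC omega by (intro divide_pos_pos add_pos_pos mult_pos_pos) auto
  then show ?thesis using sl_pos by (simp add: aa_def)
qed
lemma bb_pos: "bb > 0"
proof -
  have "(beta * etaA + alpha) / xi1 > 0" using xi_pos beta etaA alpha by (intro divide_pos_pos add_pos_pos mult_pos_pos) auto
  then show ?thesis using sl_pos by (simp add: bb_def)
qed
lemma cc_pos: "cc > 0" using g0_pos sl_pos aa_pos bb_pos xi_pos by (simp add: cc_def)

lemma FF_bounds:
  assumes nn: "\<forall>i. 0 \<le> y $ i"
  shows "0 \<le> FF y" "FF y \<le> beta * YY y" "0 \<le> YY y"
proof -
  have Y: "YY y \<ge> 0" using nn etaC etaA unfolding YY_def by (simp add: forall_5)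
  show "0 \<le> YY y" by (rule Y)
  have N: "NN y \<ge> 0" and S: "y$1 \<ge> 0" and SN: "y$1 \<le> NN y" using nn by (simp_all add: NN_def forall_5)
  show "0 \<le> FF y" unfolding FF_def using Y N S beta by simp
  show "FF y \<le> beta * YY y"
  proof (cases "NN y = 0")
    case True then show ?thesis using Y beta by (simp add: FF_def)
  next
    case False
    then have Np: "NN y > 0" using N by simp
    have "YY y / NN y * y$1 \<le> YY y / NN y * NN y"
      using SN Y Np by (intro mult_left_mono) auto
    also have "\<dots> = YY y" using Np by simp
    finally show ?thesis unfolding FF_def using beta
      by (metis mult_left_mono less_imp_le times_divide_eq_right mult.assoc)
  qed
qed

lemma LL_deriv_bound:
  assumes nn: "\<forall>i. 0 \<le> y $ i"
  shows "f y $ 2 + aa * f y $ 3 + bb * f y $ 4 \<le> - cc * LL y"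
proof -
  have I: "y$2 \<ge> 0" and C: "y$3 \<ge> 0" and A: "y$4 \<ge> 0" using nn by auto
  have "f y $ 2 + aa * f y $ 3 + bb * f y $ 4
      = FF y - (rho + phi + mu) * y$2 + alpha * y$4 + omega * y$3
        + aa * (phi * y$2 - xi2 * y$3) + bb * (rho * y$2 - xi1 * y$4)"
    by (simp add: f_nth xi1_def xi2_def)
  also have "\<dots> \<le> beta * YY y - (rho + phi + mu) * y$2 + alpha * y$4 + omega * y$3
        + aa * (phi * y$2 - xi2 * y$3) + bb * (rho * y$2 - xi1 * y$4)"
    using FF_bounds[OF nn] by simp
  also have "\<dots> = (beta - (rho + phi + mu) + aa * phi + bb * rho) * y$2
        + (beta * etaC + omega - aa * xi2) * y$3 + (beta * etaA + alpha - bb * xi1) * y$4"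
    by (simp add: YY_def algebra_simps)
  also have "\<dots> = (- g0/2) * y$2 + (- sl * xi2) * y$3 + (- sl * xi1) * y$4"
  proof -
    define P1 where "P1 = (beta * etaC + omega) / xi2"
    define P2 where "P2 = (beta * etaA + alpha) / xi1"
    have g: "g0 = (rho + phi + mu) - beta - phi * P1 - rho * P2" unfolding g0_def P1_def P2_def by simp
    have sg: "sl * (phi + rho) = g0 / 2" unfolding sl_def using phi rho by (simp add: field_simps)
    have e1: "beta - (rho + phi + mu) + aa * phi + bb * rho = - g0/2"
      unfolding aa_def bb_def P1_def[symmetric] P2_def[symmetric] using sg g by (simp add: algebra_simps)
    have e2: "beta * etaC + omega - aa * xi2 = - sl * xi2"
      unfolding aa_def using xi_pos by (simp add: field_simps)
    have e3: "beta * etaA + alpha - bb * xi1 = - sl * xi1"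
      unfolding bb_def using xi_pos by (simp add: field_simps)
    show ?thesis by (simp only: e1 e2 e3)
  qed
  also have "\<dots> \<le> (- cc) * y$2 + (- cc * aa) * y$3 + (- cc * bb) * y$4"
  proof -
    have "cc \<le> g0/2" unfolding cc_def by (rule min.cobounded1)
    moreover have "cc * aa \<le> sl * xi2"
    proof -
      have "cc \<le> sl * xi2 / aa" unfolding cc_def by linarith
      then show ?thesis using aa_pos by (simp add: le_divide_eq)
    qed
    moreover have "cc * bb \<le> sl * xi1"
    proof -
      have "cc \<le> sl * xi1 / bb" unfolding cc_def by linarith
      then show ?thesis using bb_pos by (simp add: le_divide_eq)
    qed
    ultimately show ?thesis using I C A
      by (intro add_mono mult_right_mono) auto
  qed
  also have "\<dots> = - cc * LL y" by (simp add: LL_def algebra_simps)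
  finally show ?thesis .
qed

end

context hiv begin

definition "S0 = (theta + mu) * Lam / (mu * (theta + psi + mu))"
definition "E0 = psi * Lam / (mu * (theta + psi + mu))"
definition "pp = mk5 S0 0 0 0 E0"
definition "lam2 = mu + theta + psi"
definition "m2 = max 1 (max (etaC / aa) (etaA / bb))"
definition "A0 = 2 * psi^2 / (lam2 * mu) + 1"
definition "K0 = A0 * (beta * m2)^2 / (mu * cc) + 1"
definition "eP y = y$1 + y$5 - Lam / mu"
definition "eE y = y$5 - E0"
definition "VV y = A0 * (eP y)^2 + (eE y)^2 + K0 * (LL y)^2"
definition "kap = min (mu/2) cc"

lemma den_pos: "mu * (theta + psi + mu) > 0" using mu theta psi by simp
lemma den_nz: "mu \<noteq> 0" "theta + psi + mu \<noteq> 0" using mu theta psi by auto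

lemma hS: "mu * (theta + psi + mu) * S0 = (theta + mu) * Lam"
  unfolding S0_def using den_nz by simp
lemma hE: "mu * (theta + psi + mu) * E0 = psi * Lam"
  unfolding E0_def using den_nz by simp

lemma S0E0: "S0 + E0 = Lam / mu"
proof -
  have "mu * (theta + psi + mu) * (S0 + E0) = mu * (theta + psi + mu) * S0 + mu * (theta + psi + mu) * E0"
    by (simp add: algebra_simps)
  also have "\<dots> = mu * (theta + psi + mu) * (Lam / mu)" unfolding hS hE using den_nz by (simp add: algebra_simps)
  finally have "mu * (S0 + E0) = Lam" using den_nz by simp
  then show ?thesis using den_nz by (simp add: eq_divide_eq mult.commute)
qed

lemma lam2E0: "lam2 * E0 = psi * Lam / mu"
proof -
  have "mu * (lam2 * E0) = psi * Lam" using hE unfolding lam2_def by (simp add: algebra_simps)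
  then show ?thesis using mu by (simp add: field_simps)
qed

lemma S0E0_nn: "S0 \<ge> 0" "E0 \<ge> 0"
  unfolding S0_def E0_def using den_pos Lam theta psi mu by simp_all

lemma A0_ge: "A0 \<ge> 1" unfolding A0_def lam2_def using mu theta psi by simp
lemma K0_ge: "K0 \<ge> 1" unfolding K0_def using mu cc_pos A0_ge by simp

lemma pp_in: "pp \<in> Omega_P Lam mu psi theta"
  unfolding Omega_P_def pp_def using S0E0 S0E0_nn
  by (simp add: forall_5 S0_def[symmetric] E0_def[symmetric])

lemma f_pp: "f pp = 0"
proof -
  have F: "FF pp = 0" by (simp add: FF_def YY_def pp_def)
  define D where "D = mu * (theta + psi + mu)"
  have D: "D \<noteq> 0" using den_nz by (simp add: D_def)
  have "D * (Lam - mu * S0 - psi * S0 + theta * E0) = D * Lam - (mu + psi) * (D * S0) + theta * (D * E0)"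
    by (simp add: algebra_simps)
  also have "\<dots> = 0" unfolding D_def hS hE by (simp add: algebra_simps)
  finally have e1: "Lam - mu * S0 - psi * S0 + theta * E0 = 0" using D by simp
  have "D * (psi * S0 - (mu + theta) * E0) = psi * (D * S0) - (mu + theta) * (D * E0)"
    by (simp add: algebra_simps)
  also have "\<dots> = 0" unfolding D_def hS hE by (simp add: algebra_simps)
  finally have e5: "psi * S0 - (mu + theta) * E0 = 0" using D by simp
  show ?thesis unfolding vec5_eq using F e1 e5 by (simp add: f_nth pp_def)
qed

lemma m2_ge: "m2 \<ge> 1" "etaC / aa \<le> m2" "etaA / bb \<le> m2"
  unfolding m2_def by auto

lemma YY_le: assumes nn: "\<forall>i. 0 \<le> y $ i" shows "YY y \<le> m2 * LL y"
proof -
  have I: "y$2 \<ge> 0" and C: "y$3 \<ge> 0" and A: "y$4 \<ge> 0" using nn by auto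
  have t1: "1 * y$2 \<le> m2 * y$2" using I m2_ge by (intro mult_right_mono) auto
  have "etaC * y$3 = (etaC / aa) * (aa * y$3)" using aa_pos by simp
  also have "\<dots> \<le> m2 * (aa * y$3)" using m2_ge aa_pos C by (intro mult_right_mono) auto
  finally have t2: "etaC * y$3 \<le> m2 * (aa * y$3)" .
  have "etaA * y$4 = (etaA / bb) * (bb * y$4)" using bb_pos by simp
  also have "\<dots> \<le> m2 * (bb * y$4)" using m2_ge bb_pos A by (intro mult_right_mono) auto
  finally have t3: "etaA * y$4 \<le> m2 * (bb * y$4)" .
  have "YY y \<le> m2 * y$2 + m2 * (aa * y$3) + m2 * (bb * y$4)"
    unfolding YY_def using t1 t2 t3 by simp
  also have "\<dots> = m2 * LL y" by (simp add: LL_def algebra_simps)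
  finally show ?thesis .
qed

lemma LL_nn: assumes nn: "\<forall>i. 0 \<le> y $ i" shows "LL y \<ge> 0"
  using nn aa_pos bb_pos unfolding LL_def by (simp add: forall_5)

lemma eP_deriv_id: "f y $ 1 + f y $ 5 = - mu * eP y - FF y"
  unfolding eP_def f_nth using mu by (simp add: field_simps)

lemma eE_deriv_id: "f y $ 5 = psi * eP y - lam2 * eE y"
proof -
  have "psi * eP y - lam2 * eE y = psi * y$1 + psi * y$5 - psi * Lam / mu - lam2 * y$5 + lam2 * E0"
    unfolding eP_def eE_def by (simp add: algebra_simps)
  also have "\<dots> = psi * y$1 - (mu + theta) * y$5" using lam2E0 by (simp add: lam2_def algebra_simps)
  finally show ?thesis by (simp add: f_nth)
qed

lemma VV_dot_bound:
  assumes nn: "\<forall>i. 0 \<le> y $ i"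
  shows "2 * A0 * eP y * (f y $ 1 + f y $ 5) + 2 * eE y * f y $ 5
      + 2 * K0 * LL y * (f y $ 2 + aa * f y $ 3 + bb * f y $ 4) \<le> - kap * VV y"
proof -
  have B: "beta * m2 \<ge> 0" using beta m2_ge by simp
  have FB: "FF y \<le> (beta * m2) * LL y"
  proof -
    have "FF y \<le> beta * YY y" by (rule FF_bounds(2)[OF nn])
    also have "\<dots> \<le> beta * (m2 * LL y)" using YY_le[OF nn] beta by (intro mult_left_mono) auto
    finally show ?thesis by (simp add: mult.assoc)
  qed
  have l2: "lam2 \<ge> mu" unfolding lam2_def using theta psi by simp
  have "2 * A0 * eP y * (- mu * eP y - FF y) + 2 * eE y * (psi * eP y - lam2 * eE y)
      + 2 * K0 * LL y * (f y $ 2 + aa * f y $ 3 + bb * f y $ 4)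
    \<le> - (min (mu/2) cc) * (A0 * (eP y)^2 + (eE y)^2 + K0 * (LL y)^2)"
    by (rule lyap_alg[OF mu l2 cc_pos B FF_bounds(1)[OF nn] FB LL_nn[OF nn] LL_deriv_bound[OF nn]
          A0_def K0_def])
  then show ?thesis unfolding eP_deriv_id eE_deriv_id[symmetric] VV_def kap_def .
qed

lemma VV_deriv:
  assumes sol: "ode_solution f x" and t: "t > 0"
  shows "((\<lambda>t. VV (x t)) has_real_derivative
     2 * A0 * eP (x t) * (f (x t) $ 1 + f (x t) $ 5) + 2 * eE (x t) * f (x t) $ 5
      + 2 * K0 * LL (x t) * (f (x t) $ 2 + aa * f (x t) $ 3 + bb * f (x t) $ 4)) (at t)"
proof -
  have d1: "((\<lambda>t. x t $ 1) has_real_derivative f (x t) $ 1) (at t)" by (rule ode_comp_deriv[OF sol t])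
  have d2: "((\<lambda>t. x t $ 2) has_real_derivative f (x t) $ 2) (at t)" by (rule ode_comp_deriv[OF sol t])
  have d3: "((\<lambda>t. x t $ 3) has_real_derivative f (x t) $ 3) (at t)" by (rule ode_comp_deriv[OF sol t])
  have d4: "((\<lambda>t. x t $ 4) has_real_derivative f (x t) $ 4) (at t)" by (rule ode_comp_deriv[OF sol t])
  have d5: "((\<lambda>t. x t $ 5) has_real_derivative f (x t) $ 5) (at t)" by (rule ode_comp_deriv[OF sol t])
  have dP: "((\<lambda>t. eP (x t)) has_real_derivative f (x t) $ 1 + f (x t) $ 5 - 0) (at t)"
    unfolding eP_def by (rule DERIV_diff[OF DERIV_add[OF d1 d5] DERIV_const])
  have dE: "((\<lambda>t. eE (x t)) has_real_derivative f (x t) $ 5 - 0) (at t)"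
    unfolding eE_def by (rule DERIV_diff[OF d5 DERIV_const])
  have dL: "((\<lambda>t. LL (x t)) has_real_derivative f (x t) $ 2 + aa * f (x t) $ 3 + bb * f (x t) $ 4) (at t)"
    unfolding LL_def by (rule DERIV_add[OF DERIV_add[OF d2 DERIV_cmult[OF d3]] DERIV_cmult[OF d4]])
  have sq: "((\<lambda>t. g t * g t) has_real_derivative 2 * g t * D) (at t)"
    if "(g has_real_derivative D) (at t)" for g :: "real \<Rightarrow> real" and D
    using DERIV_mult[OF that that] by (simp add: algebra_simps)
  have "((\<lambda>t. A0 * (eP (x t) * eP (x t)) + eE (x t) * eE (x t) + K0 * (LL (x t) * LL (x t))) has_real_derivative
     A0 * (2 * eP (x t) * (f (x t) $ 1 + f (x t) $ 5 - 0)) + 2 * eE (x t) * (f (x t) $ 5 - 0)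
     + K0 * (2 * LL (x t) * (f (x t) $ 2 + aa * f (x t) $ 3 + bb * f (x t) $ 4))) (at t)"
    by (rule DERIV_add[OF DERIV_add[OF DERIV_cmult[OF sq[OF dP]] sq[OF dE]] DERIV_cmult[OF sq[OF dL]]])
  then show ?thesis unfolding VV_def power2_eq_square by (simp add: algebra_simps)
qed

lemma VV_decay:
  assumes sol: "ode_solution f x" and x0: "x 0 \<in> Omega_P Lam mu psi theta" and t: "t \<ge> 0"
  shows "VV (x t) \<le> VV (x 0) * exp (- kap * t)"
proof -
  have nn0: "\<forall>i. 0 \<le> x 0 $ i" using x0 by (simp add: Omega_P_def)
  have nn: "\<forall>i. 0 \<le> x s $ i" if "s \<ge> 0" for s using invariance[OF sol nn0] that by blast
  have "VV (x t) \<le> VV (x 0) * exp ((- kap) * (t - 0))"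
  proof (rule gronwall_exp)
    show "0 \<le> t" by (rule t)
    have "continuous_on {0..t} x" using ode_cont[OF sol] by (rule continuous_on_subset) auto
    then show "continuous_on {0..t} (\<lambda>t. VV (x t))"
      unfolding VV_def eP_def eE_def LL_def by (intro continuous_intros)
    fix s assume s: "0 < s" "s < t"
    show "((\<lambda>t. VV (x t)) has_real_derivative
     2 * A0 * eP (x s) * (f (x s) $ 1 + f (x s) $ 5) + 2 * eE (x s) * f (x s) $ 5
      + 2 * K0 * LL (x s) * (f (x s) $ 2 + aa * f (x s) $ 3 + bb * f (x s) $ 4)) (at s)"
      by (rule VV_deriv[OF sol s(1)])
    show "2 * A0 * eP (x s) * (f (x s) $ 1 + f (x s) $ 5) + 2 * eE (x s) * f (x s) $ 5
      + 2 * K0 * LL (x s) * (f (x s) $ 2 + aa * f (x s) $ 3 + bb * f (x s) $ 4) \<le> - kap * VV (x s)"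
      using VV_dot_bound[OF nn] s by simp
  qed
  then show ?thesis by simp
qed

definition "mm = min 1 (min aa bb)"
definition "MM = max 1 (max aa bb)"
definition "Clow = 3 + 1 / mm^2"
definition "Cup = 2 * A0 + 1 + 3 * K0 * MM^2"

lemma mm_props: "mm > 0" "mm \<le> 1" "mm \<le> aa" "mm \<le> bb"
  using aa_pos bb_pos by (auto simp: mm_def)

lemma MM_props: "MM \<ge> 1" "aa \<le> MM" "bb \<le> MM"
  by (auto simp: MM_def)

lemma VV_nn: "VV y \<ge> 0"
  unfolding VV_def using A0_ge K0_ge by simp

lemma Clow_nn: "Clow \<ge> 0" unfolding Clow_def by simp
lemma Cup_nn: "Cup \<ge> 0" unfolding Cup_def using A0_ge K0_ge by simp

lemma dist_pp: "(dist y pp)^2 = (y$1 - S0)^2 + (y$2)^2 + (y$3)^2 + (y$4)^2 + (y$5 - E0)^2"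
  unfolding dist_sq5 by (simp add: pp_def)

lemma dist_le_V:
  assumes nn: "\<forall>i. 0 \<le> y $ i"
  shows "(dist y pp)^2 \<le> Clow * VV y"
proof -
  have I: "y$2 \<ge> 0" and C: "y$3 \<ge> 0" and A: "y$4 \<ge> 0" using nn by auto
  have S0e: "S0 = Lam / mu - E0" using S0E0 by simp
  have y1: "y$1 - S0 = eP y - eE y" unfolding eP_def eE_def S0e by simp
  have y5: "y$5 - E0 = eE y" unfolding eE_def by simp
  define sm where "sm = y$2 + y$3 + y$4"
  have s: "(y$2)^2 + (y$3)^2 + (y$4)^2 \<le> sm^2" unfolding sm_def using I C A by (rule sq3nn)
  have ml: "mm * sm \<le> LL y"
  proof -
    have "mm * y$2 \<le> 1 * y$2" using mm_props I by (intro mult_right_mono) auto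
    moreover have "mm * y$3 \<le> aa * y$3" using mm_props C by (intro mult_right_mono) auto
    moreover have "mm * y$4 \<le> bb * y$4" using mm_props A by (intro mult_right_mono) auto
    ultimately show ?thesis unfolding sm_def LL_def by (simp add: algebra_simps)
  qed
  have ms0: "0 \<le> mm * sm" using mm_props I C A unfolding sm_def by simp
  have "(mm * sm)^2 \<le> (LL y)^2" using ml ms0 by (intro power_mono) auto
  then have "mm^2 * sm^2 \<le> (LL y)^2" by (simp add: power_mult_distrib)
  then have "sm^2 \<le> (LL y)^2 / mm^2" using mm_props by (simp add: le_divide_eq mult.commute)
  then have s2: "(y$2)^2 + (y$3)^2 + (y$4)^2 \<le> (1 / mm^2) * (LL y)^2" using s by simp
  have s1: "(eP y - eE y)^2 \<le> 2 * (eP y)^2 + 2 * (eE y)^2" using sq2m[of "eP y" "eE y"] by (simp only: distrib_left)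
  have "(dist y pp)^2 \<le> 2 * (eP y)^2 + 3 * (eE y)^2 + (1 / mm^2) * (LL y)^2"
    unfolding dist_pp y1 y5 using s1 s2 by linarith
  also have "\<dots> \<le> (3 + 1 / mm^2) * (A0 * (eP y)^2 + (eE y)^2 + K0 * (LL y)^2)"
    by (rule clow_alg) (use A0_ge K0_ge in auto)
  finally show ?thesis unfolding Clow_def VV_def .
qed

lemma V_le_dist: "VV y \<le> Cup * (dist y pp)^2"
proof -
  define D where "D = (dist y pp)^2"
  define d1 where "d1 = y$1 - S0"
  define d5 where "d5 = y$5 - E0"
  have Dd: "D = d1^2 + (y$2)^2 + (y$3)^2 + (y$4)^2 + d5^2" unfolding D_def d1_def d5_def by (rule dist_pp)
  have eP: "eP y = d1 + d5" unfolding eP_def d1_def d5_def using S0E0 by (simp add: algebra_simps)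
  have eE: "eE y = d5" unfolding eE_def d5_def by simp
  have p1: "(eP y)^2 \<le> 2 * (d1^2 + d5^2)" unfolding eP by (rule sq2)
  have "(LL y)^2 \<le> 3 * ((y$2)^2 + (aa * y$3)^2 + (bb * y$4)^2)" unfolding LL_def by (rule sq3)
  also have "\<dots> \<le> 3 * (MM^2 * ((y$2)^2 + (y$3)^2 + (y$4)^2))"
  proof -
    have "1 \<le> MM^2" using MM_props by simp
    then have a: "(y$2)^2 \<le> MM^2 * (y$2)^2" using mult_right_mono[of 1 "MM^2" "(y$2)^2"] by simp
    have "aa^2 \<le> MM^2" using MM_props aa_pos by (intro power_mono) auto
    then have b: "(aa * y$3)^2 \<le> MM^2 * (y$3)^2" by (simp add: power_mult_distrib mult_right_mono)
    have "bb^2 \<le> MM^2" using MM_props bb_pos by (intro power_mono) auto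
    then have c: "(bb * y$4)^2 \<le> MM^2 * (y$4)^2" by (simp add: power_mult_distrib mult_right_mono)
    show ?thesis using a b c by (simp add: algebra_simps)
  qed
  finally have p3: "(LL y)^2 \<le> 3 * MM^2 * ((y$2)^2 + (y$3)^2 + (y$4)^2)" by (simp add: algebra_simps)
  have q1: "d1^2 + d5^2 \<le> D" "(y$2)^2 + (y$3)^2 + (y$4)^2 \<le> D" "d5^2 \<le> D" unfolding Dd by auto
  have "VV y \<le> A0 * (2 * (d1^2 + d5^2)) + d5^2 + K0 * (3 * MM^2 * ((y$2)^2 + (y$3)^2 + (y$4)^2))"
    unfolding VV_def eE using p1 p3 A0_ge K0_ge
    by (intro add_mono mult_left_mono) auto
  also have "\<dots> \<le> A0 * (2 * D) + D + K0 * (3 * MM^2 * D)"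
    using q1 A0_ge K0_ge by (intro add_mono mult_left_mono) auto
  also have "\<dots> = Cup * D" unfolding Cup_def by (simp add: algebra_simps)
  finally show ?thesis unfolding D_def .
qed

end

context hiv begin
lemma kap_pos: "kap > 0" unfolding kap_def using mu cc_pos by simp

lemma gas: "gas_in f (Omega_P Lam mu psi theta) pp"
  unfolding gas_in_def
proof (intro conjI allI impI)
  show "pp \<in> Omega_P Lam mu psi theta" by (rule pp_in)
  show "f pp = 0" by (rule f_pp)
next
  fix \<epsilon> :: real assume e: "\<epsilon> > 0"
  define C where "C = Clow * Cup"
  have C0: "C \<ge> 0" unfolding C_def using Clow_nn Cup_nn by simp
  define \<delta> where "\<delta> = \<epsilon> / sqrt (C + 1)"
  have sq: "sqrt (C + 1) > 0" using C0 by simp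
  have d0: "\<delta> > 0" unfolding \<delta>_def using e sq by simp
  have d2: "\<delta>^2 = \<epsilon>^2 / (C + 1)" unfolding \<delta>_def using C0 by (simp add: power_divide)
  have Cd: "C * \<delta>^2 < \<epsilon>^2"
  proof -
    have "C * \<delta>^2 = (C / (C + 1)) * \<epsilon>^2" unfolding d2 by simp
    also have "\<dots> < 1 * \<epsilon>^2" using C0 e by (intro mult_strict_right_mono) auto
    finally show ?thesis by simp
  qed
  show "\<exists>\<delta>>0. \<forall>x. ode_solution f x \<and> x 0 \<in> Omega_P Lam mu psi theta \<and> dist (x 0) pp < \<delta>
                         \<longrightarrow> (\<forall>t\<ge>0. dist (x t) pp < \<epsilon>)"
  proof (intro exI[of _ \<delta>] conjI allI impI)
    show "\<delta> > 0" by (rule d0)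
    fix x and t :: real assume H: "ode_solution f x \<and> x 0 \<in> Omega_P Lam mu psi theta \<and> dist (x 0) pp < \<delta>" and t: "0 \<le> t"
    then have sol: "ode_solution f x" and x0: "x 0 \<in> Omega_P Lam mu psi theta" and dx: "dist (x 0) pp < \<delta>" by auto
    have nn0: "\<forall>i. 0 \<le> x 0 $ i" using x0 by (simp add: Omega_P_def)
    have nn: "\<forall>i. 0 \<le> x t $ i" using invariance[OF sol nn0] t by blast
    have ex: "exp (- kap * t) \<le> 1" using kap_pos t by simp
    have "(dist (x t) pp)^2 \<le> Clow * VV (x t)" by (rule dist_le_V[OF nn])
    also have "\<dots> \<le> Clow * (VV (x 0) * exp (- kap * t))"
      using VV_decay[OF sol x0 t] Clow_nn by (intro mult_left_mono) auto
    also have "\<dots> \<le> Clow * VV (x 0)"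
      using ex VV_nn[of "x 0"] Clow_nn by (intro mult_left_mono) (auto simp: mult_left_le)
    also have "\<dots> \<le> Clow * (Cup * (dist (x 0) pp)^2)"
      using V_le_dist Clow_nn by (intro mult_left_mono) auto
    also have "\<dots> = C * (dist (x 0) pp)^2" by (simp add: C_def)
    also have "\<dots> \<le> C * \<delta>^2"
      using dx C0 by (intro mult_left_mono power_mono) auto
    also have "\<dots> < \<epsilon>^2" by (rule Cd)
    finally have "(dist (x t) pp)^2 < \<epsilon>^2" .
    then show "dist (x t) pp < \<epsilon>" by (rule power_less_imp_less_base) (use e in simp)
  qed
next
  fix x assume H: "ode_solution f x \<and> x 0 \<in> Omega_P Lam mu psi theta"
  then have sol: "ode_solution f x" and x0: "x 0 \<in> Omega_P Lam mu psi theta" by auto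
  have nn0: "\<forall>i. 0 \<le> x 0 $ i" using x0 by (simp add: Omega_P_def)
  define V0 where "V0 = VV (x 0)"
  have "filterlim (\<lambda>t. kap * t) at_top at_top"
    by (rule filterlim_tendsto_pos_mult_at_top[OF tendsto_const kap_pos filterlim_ident])
  then have "filterlim (\<lambda>t. - kap * t) at_bot at_top"
    by (subst filterlim_uminus_at_bot) simp
  then have ex: "((\<lambda>t. exp (- kap * t)) \<longlongrightarrow> 0) at_top"
    by (rule filterlim_compose[OF exp_at_bot])
  have lim: "((\<lambda>t. sqrt (Clow * (V0 * exp (- kap * t)))) \<longlongrightarrow> 0) at_top"
    using tendsto_real_sqrt[OF tendsto_mult[OF tendsto_const tendsto_mult[OF tendsto_const ex]], of Clow V0]
    by simp
  have "((\<lambda>t. dist (x t) pp) \<longlongrightarrow> 0) at_top"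
  proof (rule tendsto_sandwich[OF _ _ tendsto_const lim])
    show "\<forall>\<^sub>F t in at_top. 0 \<le> dist (x t) pp" by simp
    show "\<forall>\<^sub>F t in at_top. dist (x t) pp \<le> sqrt (Clow * (V0 * exp (- kap * t)))"
      using eventually_ge_at_top[of "0::real"]
    proof (rule eventually_mono)
      fix t :: real assume t: "0 \<le> t"
      have nn: "\<forall>i. 0 \<le> x t $ i" using invariance[OF sol nn0] t by blast
      have "(dist (x t) pp)^2 \<le> Clow * VV (x t)" by (rule dist_le_V[OF nn])
      also have "\<dots> \<le> Clow * (V0 * exp (- kap * t))"
        unfolding V0_def using VV_decay[OF sol x0 t] Clow_nn by (intro mult_left_mono) auto
      finally have "sqrt ((dist (x t) pp)^2) \<le> sqrt (Clow * (V0 * exp (- kap * t)))"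
        by (rule real_sqrt_le_mono)
      then show "dist (x t) pp \<le> sqrt (Clow * (V0 * exp (- kap * t)))" by simp
    qed
  qed
  then show "(x \<longlongrightarrow> pp) at_top" by (rule iffD2[OF tendsto_dist_iff])
qed

end

theorem mainTheorem3:
  fixes Lam mu beta rho phi alpha omega d psi theta etaC etaA :: real
  assumes "Lam > 0" "mu > 0" "beta > 0" "rho > 0" "phi > 0" "alpha > 0" "omega > 0"
    and "d \<ge> 0" "psi \<ge> 0" "theta \<ge> 0"
    and "0 < etaC" "etaC \<le> 1" "etaA \<ge> 1"
    and "R0_hiv mu beta rho phi alpha omega d etaC etaA < 1"
  shows "gas_in (hiv_rhs Lam mu beta rho phi alpha omega d psi theta etaC etaA)
                (Omega_P Lam mu psi theta)
                (mk5 ((theta + mu) * Lam / (mu * (theta + psi + mu))) 0 0 0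
                     (psi * Lam / (mu * (theta + psi + mu))))"
proof -
  interpret H: hiv Lam mu beta rho phi alpha omega d psi theta etaC etaA
    using assms by unfold_locales
  show ?thesis using H.gas unfolding H.pp_def H.S0_def H.E0_def .
qed

end
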